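(* Let $T$ be a positive integer, let $N=(N_l)_{0\le l\le T}$ satisfy $N_0=0$ with increments $N_{l+1}-N_l$ independent Poisson random variables with parameters $\gamma_l\ge0$, $0\le l\le T-1$, let $\mathfrak{F}=(\mathfrak{F}_k)$ be the natural augmented filtration of $N$, $I_k=I_0(-1)^{N_k}$ with $I_0\in\{-1,1\}$ deterministic, and for $1\le l\le T$ let $u_l=\frac12(1+e^{-2\gamma_{l-1}})$, $v_l=\frac12(1-e^{-2\gamma_{l-1}})$. For $0\le k\le T$ define $$Q_k=\sup_{\tau\in\mathcal{T}^k}\mathbb{E}_k\Big[\sum_{\ell=k+1}^{T}\big(\mathbf{1}_{I_\ell=-1}-\mathbf{1}_{I_\ell=1}\big)\mathbf{1}_{\ell\le\tau}\Big],$$ where $\mathcal{T}^k$ is the set of $\mathfrak{F}$-stopping times with values in $\{k,\dots,T\}$. Then $Q_k=Q(k,I_k)$, where $Q:\{0,\dots,T\}\times\{1,-1\}\to\mathbb{R}$ is given by $Q(T,\pm1)=0$ and, for $0\le k<T$, $$Q(k,-1)=e^{-2\gamma_k}+v_{k+1}Q(k+1,1)+u_{k+1}Q(k+1,-1)>0,$$ $$Q(k,1)=\max\big(0,\,-e^{-2\gamma_k}+u_{k+1}Q(k+1,1)+v_{k+1}Q(k+1,-1)\big).$$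
   Context: $\mathbb{E}_k$ denotes conditional expectation given $\mathfrak{F}_k$. *)

theory Defs
  imports "HOL-Probability.Probability"
begin

definition nat_gen_sets :: "'a measure \<Rightarrow> (nat \<Rightarrow> 'a \<Rightarrow> int) \<Rightarrow> nat \<Rightarrow> nat \<Rightarrow> 'a set set" where
  "nat_gen_sets M N T k =
     sets (sigma (space M) {{\<omega> \<in> space M. N j \<omega> = n} | j n. j \<le> min k T})"

definition aug_nat_filtration :: "'a measure \<Rightarrow> (nat \<Rightarrow> 'a \<Rightarrow> int) \<Rightarrow> nat \<Rightarrow> nat \<Rightarrow> 'a measure" where
  "aug_nat_filtration M N T k =
     sigma (space M)
       {A \<in> sets M. \<exists>B \<in> nat_gen_sets M N T k. \<exists>C \<in> null_sets M. (A - B) \<union> (B - A) \<subseteq> C}"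

definition is_ess_sup :: "'a measure \<Rightarrow> ('a \<Rightarrow> real) set \<Rightarrow> ('a \<Rightarrow> real) \<Rightarrow> bool" where
  "is_ess_sup M Xs Y \<longleftrightarrow>
     Y \<in> borel_measurable M \<and>
     (\<forall>X \<in> Xs. AE \<omega> in M. X \<omega> \<le> Y \<omega>) \<and>
     (\<forall>Z \<in> borel_measurable M. (\<forall>X \<in> Xs. AE \<omega> in M. X \<omega> \<le> Z \<omega>) \<longrightarrow> (AE \<omega> in M. Y \<omega> \<le> Z \<omega>))"

definition u_coef :: "(nat \<Rightarrow> real) \<Rightarrow> nat \<Rightarrow> real" where
  "u_coef \<gamma> l = (1 + exp (- 2 * \<gamma> (l - 1))) / 2"

definition v_coef :: "(nat \<Rightarrow> real) \<Rightarrow> nat \<Rightarrow> real" where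
  "v_coef \<gamma> l = (1 - exp (- 2 * \<gamma> (l - 1))) / 2"

function Qfun :: "(nat \<Rightarrow> real) \<Rightarrow> nat \<Rightarrow> nat \<Rightarrow> int \<Rightarrow> real" where
  "Qfun \<gamma> T k i =
     (if T \<le> k then 0
      else if i = -1 then
        exp (- 2 * \<gamma> k) + v_coef \<gamma> (Suc k) * Qfun \<gamma> T (Suc k) 1
          + u_coef \<gamma> (Suc k) * Qfun \<gamma> T (Suc k) (-1)
      else
        max 0 (- exp (- 2 * \<gamma> k) + u_coef \<gamma> (Suc k) * Qfun \<gamma> T (Suc k) 1
          + v_coef \<gamma> (Suc k) * Qfun \<gamma> T (Suc k) (-1)))"
  by pat_completeness auto
termination by (relation "Wellfounded.measure (\<lambda>(\<gamma>, T, k, i). T - k)") auto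

end

theory Submission
  imports Defs
begin

lemma pp_sums0: fixes g :: real shows "(\<lambda>n. exp (- g) * g ^ n / fact n) sums 1"
proof -
  have s: "(\<lambda>n. exp (- g) * (g ^ n /\<^sub>R fact n)) sums (exp (- g) * exp g)"
    by (intro sums_mult exp_converges)
  have e1: "exp (- g) * exp g = 1" by (simp add: exp_minus)
  have e2: "(\<lambda>n. exp (- g) * (g ^ n /\<^sub>R fact n)) = (\<lambda>n. exp (- g) * g ^ n / fact n)"
    by (rule ext) (simp add: divide_inverse)
  show ?thesis using s unfolding e1 e2 .
qed

lemma pp_alt_sums0: fixes g :: real shows "(\<lambda>n. (-1)^n * (exp (- g) * g ^ n / fact n)) sums exp (-2 * g)"
proof -
  have s: "(\<lambda>n. exp (- g) * ((- g) ^ n /\<^sub>R fact n)) sums (exp (- g) * exp (- g))"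
    by (intro sums_mult exp_converges)
  have e1: "exp (- g) * exp (- g) = exp (-2 * g)" by (simp add: mult_exp_exp)
  have e2: "(\<lambda>n. exp (- g) * ((- g) ^ n /\<^sub>R fact n)) = (\<lambda>n. (-1)^n * (exp (- g) * g ^ n / fact n))"
    by (rule ext) (simp only: power_minus[of g] real_scaleR_def divide_inverse mult_ac)
  show ?thesis using s unfolding e1 e2 .
qed

locale poiss =
  fixes M :: "'a measure" and T :: nat and \<gamma> :: "nat \<Rightarrow> real"
    and N :: "nat \<Rightarrow> 'a \<Rightarrow> int" and I0 :: int
  assumes ps: "prob_space M"
    and Tpos: "T > 0"
    and gam: "\<forall>l < T. \<gamma> l \<ge> 0"
    and N0: "\<forall>\<omega> \<in> space M. N 0 \<omega> = 0"
    and indep: "prob_space.indep_vars M (\<lambda>_. count_space UNIV) (\<lambda>l \<omega>. N (Suc l) \<omega> - N l \<omega>) {..<T}"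
    and pois: "\<forall>l < T. \<forall>n::nat. measure M {\<omega> \<in> space M. N (Suc l) \<omega> - N l \<omega> = int n}
            = exp (- \<gamma> l) * \<gamma> l ^ n / fact n"
    and I0: "I0 \<in> {-1, 1}"
begin

interpretation prob_space M by (rule ps)

definition D :: "nat \<Rightarrow> 'a \<Rightarrow> int" where "D i \<omega> = N (Suc i) \<omega> - N i \<omega>"

definition genD :: "nat \<Rightarrow> 'a set set" where
  "genD i = {D i -` A \<inter> space M | A. A \<in> sets (count_space (UNIV::int set))}"

definition Sig :: "nat \<Rightarrow> 'a measure" where
  "Sig l = sigma (space M) (\<Union>i\<in>{..<l}. genD i)"

lemma indep': "indep_vars (\<lambda>_. count_space UNIV) D {..<T}"
  using indep unfolding D_def[abs_def] .

lemma D_meas: "i < T \<Longrightarrow> D i \<in> measurable M (count_space UNIV)"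
  using indep' unfolding indep_vars_def2 by auto

lemma genD_sub: "i < T \<Longrightarrow> genD i \<subseteq> sets M"
  using D_meas unfolding genD_def by (auto intro: measurable_sets)

lemma genD_Pow: "(\<Union>i\<in>{..<l}. genD i) \<subseteq> Pow (space M)"
  unfolding genD_def by auto

lemma space_Sig[simp]: "space (Sig l) = space M"
  unfolding Sig_def using genD_Pow by (simp add: space_measure_of_conv)

lemma sets_Sig: "sets (Sig l) = sigma_sets (space M) (\<Union>i\<in>{..<l}. genD i)"
  unfolding Sig_def using genD_Pow by (simp add: sets_measure_of_conv)

lemma Sig_sub: assumes "l \<le> T" shows "sets (Sig l) \<subseteq> sets M"
  unfolding sets_Sig
proof (intro sets.sigma_sets_subset UN_least)
  fix i assume "i \<in> {..<l}" then show "genD i \<subseteq> events" using genD_sub assms by auto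
qed

lemma D_meas_Sig: "i < l \<Longrightarrow> D i \<in> measurable (Sig l) (count_space UNIV)"
proof (rule measurableI)
  fix A :: "int set" assume "i < l" "A \<in> sets (count_space UNIV)"
  then show "D i -` A \<inter> space (Sig l) \<in> sets (Sig l)"
    unfolding sets_Sig by (intro sigma_sets.Basic) (auto simp: genD_def)
qed auto

lemma N_meas_Sig: "j \<le> l \<Longrightarrow> N j \<in> measurable (Sig l) (count_space UNIV)"
proof (induction j)
  case 0
  have "(\<lambda>_. 0::int) \<in> measurable (Sig l) (count_space UNIV)" by simp
  then show ?case by (rule measurable_cong[THEN iffD1, rotated]) (use N0 in auto)
next
  case (Suc j)
  have "(\<lambda>\<omega>. N j \<omega> + D j \<omega>) \<in> measurable (Sig l) (count_space UNIV)"
    using Suc D_meas_Sig[of j l] by simp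
  then show ?case by (rule measurable_cong[THEN iffD1, rotated]) (auto simp: D_def)
qed

lemma N_meas: "j \<le> T \<Longrightarrow> N j \<in> measurable M (count_space UNIV)"
  using N_meas_Sig[of j T] Sig_sub[of T] by (auto simp: measurable_def)


abbreviation F :: "nat \<Rightarrow> 'a measure" where "F \<equiv> aug_nat_filtration M N T"

definition gens :: "nat \<Rightarrow> 'a set set" where
  "gens l = {{\<omega> \<in> space M. N j \<omega> = n} | j n. j \<le> min l T}"

definition AG :: "nat \<Rightarrow> 'a set set" where
  "AG l = {A \<in> sets M. \<exists>B \<in> nat_gen_sets M N T l. \<exists>C \<in> null_sets M. (A - B) \<union> (B - A) \<subseteq> C}"

lemma nat_gen_eq: "nat_gen_sets M N T l = sigma_sets (space M) (gens l)"
  unfolding nat_gen_sets_def gens_def by (subst sets_measure_of) auto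

lemma gens_Sig: "gens l \<subseteq> sets (Sig (min l T))"
proof
  fix x assume "x \<in> gens l"
  then obtain j n where x: "x = {\<omega> \<in> space M. N j \<omega> = n}" and j: "j \<le> min l T"
    unfolding gens_def by auto
  have "N j \<in> measurable (Sig (min l T)) (count_space UNIV)" using N_meas_Sig j .
  then have "N j -` {n} \<inter> space (Sig (min l T)) \<in> sets (Sig (min l T))"
    by (rule measurable_sets) simp
  then show "x \<in> sets (Sig (min l T))" unfolding x by (simp add: vimage_def Int_def conj_commute)
qed

lemma nat_gen_Sig: "nat_gen_sets M N T l \<subseteq> sets (Sig (min l T))"
  unfolding nat_gen_eq using sets.sigma_sets_subset[of "gens l" "Sig (min l T)"] gens_Sig by simp

lemma gens_Pow: "gens l \<subseteq> Pow (space M)" unfolding gens_def by auto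

lemma nat_gen_M: "nat_gen_sets M N T l \<subseteq> sets M"
  using nat_gen_Sig Sig_sub[of "min l T"] by auto

lemma AG_M: "AG l \<subseteq> sets M" unfolding AG_def by auto

lemma AG_Pow: "AG l \<subseteq> Pow (space M)" unfolding Pow_def using AG_M[of l] sets.sets_into_space[of _ M] by blast

lemma space_F[simp]: "space (F l) = space M"
  unfolding aug_nat_filtration_def AG_def[symmetric] using AG_Pow by (simp add: space_measure_of_conv)

lemma sets_F: "sets (F l) = sigma_sets (space M) (AG l)"
  unfolding aug_nat_filtration_def AG_def[symmetric] using AG_Pow by (simp add: sets_measure_of_conv)

lemma F_M: "sets (F l) \<subseteq> sets M"
  unfolding sets_F using AG_M by (intro sets.sigma_sets_subset)

lemma subalg: "subalgebra M (F l)"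
  unfolding subalgebra_def using F_M by simp

lemma nat_gen_AG: "nat_gen_sets M N T l \<subseteq> AG l"
  unfolding AG_def using nat_gen_M by force

lemma gens_mono: "l \<le> j \<Longrightarrow> gens l \<subseteq> gens j"
  unfolding gens_def by force

lemma nat_gen_mono: "l \<le> j \<Longrightarrow> nat_gen_sets M N T l \<subseteq> nat_gen_sets M N T j"
  unfolding nat_gen_eq by (intro sigma_sets_mono') (use gens_mono in auto)

lemma AG_mono: "l \<le> j \<Longrightarrow> AG l \<subseteq> AG j"
  unfolding AG_def using nat_gen_mono by blast

lemma F_mono: "l \<le> j \<Longrightarrow> sets (F l) \<subseteq> sets (F j)"
  unfolding sets_F by (intro sigma_sets_mono') (use AG_mono in auto)

lemma N_F_sets: "l \<le> T \<Longrightarrow> {\<omega> \<in> space M. N l \<omega> = n} \<in> sets (F l)"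
proof -
  assume "l \<le> T"
  then have "{\<omega> \<in> space M. N l \<omega> = n} \<in> gens l" unfolding gens_def by auto
  then have "{\<omega> \<in> space M. N l \<omega> = n} \<in> AG l"
    using nat_gen_AG[of l] unfolding nat_gen_eq by (auto intro: sigma_sets.Basic)
  then show ?thesis unfolding sets_F by (auto intro: sigma_sets.Basic)
qed

lemma N_meas_F: "l \<le> T \<Longrightarrow> N l \<in> measurable (F l) (count_space UNIV)"
proof (rule measurable_count_space_eq2_countable[THEN iffD2], safe)
  fix a assume "l \<le> T"
  then show "N l -` {a} \<inter> space (F l) \<in> sets (F l)"
    using N_F_sets[of l a] by (simp add: vimage_def Int_def conj_commute)
qed auto

lemma Int_stable_AG: "Int_stable (AG l)"
proof (rule Int_stableI)
  fix a b assume "a \<in> AG l" "b \<in> AG l"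
  then obtain Ba Ca Bb Cb where a: "a \<in> sets M" "Ba \<in> nat_gen_sets M N T l" "Ca \<in> null_sets M" "(a - Ba) \<union> (Ba - a) \<subseteq> Ca"
    and b: "b \<in> sets M" "Bb \<in> nat_gen_sets M N T l" "Cb \<in> null_sets M" "(b - Bb) \<union> (Bb - b) \<subseteq> Cb"
    unfolding AG_def by blast
  have "Ba \<inter> Bb \<in> nat_gen_sets M N T l" using a b unfolding nat_gen_sets_def by (intro sets.Int)
  moreover have "Ca \<union> Cb \<in> null_sets M" using a b by auto
  moreover have "(a \<inter> b - Ba \<inter> Bb) \<union> (Ba \<inter> Bb - a \<inter> b) \<subseteq> Ca \<union> Cb" using a b by auto
  ultimately show "a \<inter> b \<in> AG l" unfolding AG_def using a b by blast
qed

lemma Int_stable_genD: "Int_stable (genD i)"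
  unfolding genD_def Int_stable_def
  by clarsimp (metis (no_types) Int_assoc Int_left_commute Int_absorb vimage_Int UNIV_I sets_count_space Pow_UNIV)

lemma indep_Sig: assumes "l < T"
  shows "indep_set (sigma_sets (space M) (\<Union>i\<in>{..<l}. genD i)) (sigma_sets (space M) (genD l))"
proof -
  have ind0: "indep_sets genD {..<T}" using indep' unfolding indep_vars_def2 genD_def by auto
  have "indep_sets (\<lambda>j. sigma_sets (space M) (\<Union>i\<in>case_bool {..<l} {l} j. genD i)) UNIV"
  proof (rule indep_sets_collect_sigma)
    show "indep_sets genD (\<Union>j. case_bool {..<l} {l} j)"
      by (rule indep_sets_mono_index[OF _ ind0]) (use assms in \<open>auto split: bool.split_asm\<close>)
    show "Int_stable (genD i)" for i by (rule Int_stable_genD)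
    show "disjoint_family_on (case_bool {..<l} {l}) UNIV"
      unfolding disjoint_family_on_def by (auto split: bool.split)
  qed
  moreover have "(\<lambda>j. sigma_sets (space M) (\<Union>i\<in>case_bool {..<l} {l} j. genD i)) =
     case_bool (sigma_sets (space M) (\<Union>i\<in>{..<l}. genD i)) (sigma_sets (space M) (genD l))"
    by (rule ext) (simp split: bool.split)
  ultimately show ?thesis unfolding indep_set_def by simp
qed

lemma indep_AG: assumes "l < T" shows "indep_set (AG l) (genD l)"
proof (rule indep_setI)
  show "AG l \<subseteq> events" by (rule AG_M)
  show "genD l \<subseteq> events" using genD_sub assms by auto
  fix a b assume a: "a \<in> AG l" and b: "b \<in> genD l"
  then obtain B C where B: "a \<in> sets M" "B \<in> nat_gen_sets M N T l" "C \<in> null_sets M" "(a - B) \<union> (B - a) \<subseteq> C"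
    unfolding AG_def by blast
  have BS: "B \<in> sigma_sets (space M) (\<Union>i\<in>{..<l}. genD i)"
    using nat_gen_Sig[of l] B(2) assms unfolding sets_Sig by (auto simp: min_def)
  have bS: "b \<in> sigma_sets (space M) (genD l)" using b by auto
  have BM: "B \<in> events" using B nat_gen_M by auto
  have bM: "b \<in> events" using b genD_sub assms by auto
  have ae: "AE x in M. (x \<in> a) = (x \<in> B)" using AE_not_in[OF B(3)] by eventually_elim (use B(4) in auto)
  have "prob (a \<inter> b) = prob (B \<inter> b)"
    by (rule measure_eq_AE) (use ae BM bM B(1) in \<open>auto elim!: AE_mp\<close>)
  also have "\<dots> = prob B * prob b" by (rule indep_setD[OF indep_Sig[OF assms] BS bS])
  also have "prob B = prob a" by (rule measure_eq_AE) (use ae BM bM B(1) in \<open>auto elim!: AE_mp\<close>)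
  finally show "prob (a \<inter> b) = prob a * prob b" .
qed

lemma indep_F: assumes "l < T" "A \<in> sets (F l)" "E \<in> genD l"
  shows "prob (A \<inter> E) = prob A * prob E"
proof -
  have "indep_set (sigma_sets (space M) (AG l)) (sigma_sets (space M) (genD l))"
    by (rule indep_set_sigma_sets[OF indep_AG[OF assms(1)] Int_stable_AG Int_stable_genD])
  then show ?thesis by (rule indep_setD) (use assms in \<open>auto simp: sets_F\<close>)
qed

definition pp :: "nat \<Rightarrow> nat \<Rightarrow> real" where "pp l n = exp (- \<gamma> l) * \<gamma> l ^ n / fact n"

lemma pp_sums: "pp l sums 1"
  unfolding pp_def[abs_def] by (rule pp_sums0)

lemma pp_alt_sums: "(\<lambda>n. (-1)^n * pp l n) sums exp (-2 * \<gamma> l)"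
  unfolding pp_def[abs_def] by (rule pp_alt_sums0)

definition Aev :: "nat \<Rightarrow> nat \<Rightarrow> 'a set" where
  "Aev l n = {\<omega> \<in> space M. D l \<omega> = int n}"

lemma Aev_sets: "l < T \<Longrightarrow> Aev l n \<in> events"
proof -
  assume "l < T"
  then have "D l -` {int n} \<inter> space M \<in> events" using D_meas by (intro measurable_sets) auto
  then show ?thesis unfolding Aev_def by (simp add: vimage_def Int_def conj_commute)
qed

lemma Aev_prob: "l < T \<Longrightarrow> prob (Aev l n) = pp l n"
  using pois unfolding Aev_def pp_def D_def by auto

lemma Aev_disj: "disjoint_family (Aev l)"
  unfolding disjoint_family_on_def Aev_def by auto

lemma D_nonneg: assumes "l < T" shows "AE \<omega> in M. D l \<omega> \<ge> 0"
proof -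
  have "(\<lambda>n. prob (Aev l n)) sums prob (\<Union>n. Aev l n)"
    by (rule finite_measure_UNION) (use Aev_sets assms Aev_disj in auto)
  then have "prob (\<Union>n. Aev l n) = 1" using pp_sums[of l] Aev_prob[OF assms] sums_unique2 by simp
  then have "AE \<omega> in M. \<omega> \<in> (\<Union>n. Aev l n)" by (rule AE_prob_1)
  then show ?thesis by eventually_elim (auto simp: Aev_def)
qed

lemma N_nonneg: "l \<le> T \<Longrightarrow> AE \<omega> in M. N l \<omega> \<ge> 0"
proof (induction l)
  case 0 then show ?case using N0 by (auto intro: AE_I2)
next
  case (Suc l)
  then have "AE \<omega> in M. N l \<omega> \<ge> 0" "AE \<omega> in M. D l \<omega> \<ge> 0" using D_nonneg by auto
  then show ?case by eventually_elim (auto simp: D_def)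
qed

definition Sp :: "nat \<Rightarrow> int \<Rightarrow> 'a set" where
  "Sp l s = {\<omega> \<in> space M. (-1::int) ^ nat (D l \<omega>) = s}"

lemma Sp_genD: "Sp l s \<in> genD l"
  unfolding Sp_def genD_def by (rule CollectI, rule exI[of _ "{d. (-1::int) ^ nat d = s}"]) auto

lemma Sp_sets: "l < T \<Longrightarrow> Sp l s \<in> events"
  using Sp_genD genD_sub by auto

lemma prob_Sp1: assumes "l < T" shows "prob (Sp l 1) = u_coef \<gamma> (Suc l)"
proof -
  define E where "E n = (if even n then Aev l n else {})" for n
  have s1: "(\<lambda>n. prob (E n)) sums prob (\<Union>n. E n)"
    by (rule finite_measure_UNION) (use Aev_sets assms Aev_disj in \<open>auto simp: E_def disjoint_family_on_def Aev_def\<close>)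
  have eqE: "(\<lambda>n. prob (E n)) = (\<lambda>n. (pp l n + (-1)^n * pp l n) / 2)"
    by (rule ext) (use Aev_prob[OF assms] in \<open>auto simp: E_def\<close>)
  have s2: "(\<lambda>n. (pp l n + (-1)^n * pp l n) / 2) sums ((1 + exp (-2 * \<gamma> l)) / 2)"
    by (intro sums_divide sums_add pp_sums pp_alt_sums)
  have "prob (\<Union>n. E n) = (1 + exp (-2 * \<gamma> l)) / 2"
    using sums_unique2[OF s1[unfolded eqE] s2] .
  moreover have "prob (Sp l 1) = prob (\<Union>n. E n)"
  proof (rule measure_eq_AE)
    show "AE x in M. (x \<in> Sp l 1) = (x \<in> (\<Union>n. E n))"
      using D_nonneg[OF assms]
    proof eventually_elim
      case (elim x)
      then obtain n where n: "D l x = int n" using nonneg_eq_int by blast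
      have 1: "(x \<in> Sp l 1) = (x \<in> space M \<and> even n)" by (simp add: Sp_def n minus_one_power_iff)
      have 2: "(x \<in> (\<Union>n. E n)) = (x \<in> space M \<and> even n)" by (auto simp: E_def Aev_def n)
      show ?case using 1 2 by simp
    qed
    show "Sp l 1 \<in> events" using Sp_sets assms by auto
    show "(\<Union>n. E n) \<in> events" using Aev_sets assms by (auto simp: E_def)
  qed
  ultimately show ?thesis by (simp add: u_coef_def)
qed

lemma Sp_compl: "Sp l (-1) = space M - Sp l 1"
  unfolding Sp_def by (auto simp: minus_one_power_iff)

lemma prob_Spm1: assumes "l < T" shows "prob (Sp l (-1)) = v_coef \<gamma> (Suc l)"
  using prob_compl[OF Sp_sets[OF assms, of 1]] prob_Sp1[OF assms] unfolding Sp_compl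
  by (simp add: u_coef_def v_coef_def field_simps)

definition Iv :: "nat \<Rightarrow> 'a \<Rightarrow> int" where "Iv l \<omega> = I0 * (-1) ^ nat (N l \<omega>)"

lemma Iv_vals: "Iv l \<omega> = 1 \<or> Iv l \<omega> = -1"
  using I0 by (auto simp: Iv_def minus_one_power_iff)

lemma Iv_meas_F: assumes "l \<le> T" shows "(\<lambda>\<omega>. f (Iv l \<omega>) :: real) \<in> borel_measurable (F l)"
proof -
  have "(\<lambda>n. f (I0 * (-1) ^ nat n)) \<in> measurable (count_space UNIV) borel" by simp
  from measurable_compose[OF N_meas_F[OF assms] this] show ?thesis by (simp add: Iv_def)
qed

lemma meas_F_M: "g \<in> borel_measurable (F l) \<Longrightarrow> g \<in> borel_measurable M"
  using measurable_from_subalg[OF subalg] by blast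

lemma Iv_meas: "l \<le> T \<Longrightarrow> (\<lambda>\<omega>. f (Iv l \<omega>) :: real) \<in> borel_measurable M"
  using Iv_meas_F meas_F_M by blast

lemma Iv_meas_int: assumes "l \<le> T" shows "Iv l \<in> measurable (F l) (count_space UNIV)"
proof -
  have "(\<lambda>n. I0 * (-1) ^ nat n) \<in> measurable (count_space UNIV) (count_space UNIV)" by simp
  from measurable_compose[OF N_meas_F[OF assms] this] show ?thesis by (simp add: Iv_def[abs_def])
qed

lemma Iv_set_F: assumes "l \<le> T" shows "{\<omega> \<in> space M. Iv l \<omega> = i} \<in> sets (F l)"
proof -
  have "Iv l -` {i} \<inter> space (F l) \<in> sets (F l)" by (rule measurable_sets[OF Iv_meas_int[OF assms]]) auto
  then show ?thesis by (simp add: vimage_def Int_def conj_commute)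
qed

lemma Iv_step: assumes "l < T" shows "AE \<omega> in M. Iv (Suc l) \<omega> = Iv l \<omega> * (-1) ^ nat (D l \<omega>)"
proof -
  have "AE \<omega> in M. N l \<omega> \<ge> 0" "AE \<omega> in M. D l \<omega> \<ge> 0" using N_nonneg D_nonneg assms by auto
  then show ?thesis
  proof eventually_elim
    case (elim \<omega>)
    then have "nat (N (Suc l) \<omega>) = nat (N l \<omega>) + nat (D l \<omega>)" by (simp add: D_def)
    then show ?case by (simp add: Iv_def power_add)
  qed
qed

lemma int_ind4:
  assumes "A1 \<in> events" "A2 \<in> events" "A3 \<in> events" "A4 \<in> events"
  shows "(\<integral>\<omega>. a1 * indicator A1 \<omega> + a2 * indicator A2 \<omega> + a3 * indicator A3 \<omega> + a4 * indicator A4 \<omega> \<partial>M)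
     = a1 * prob A1 + a2 * prob A2 + a3 * prob A3 + a4 * prob A4"
proof -
  have i: "integrable M (\<lambda>\<omega>. c * indicator A \<omega> :: real)" if "A \<in> events" for A c
    using that by (intro integrable_mult_right integrable_real_indicator) (auto simp: emeasure_eq_measure)
  have m: "measure M (A \<inter> space M) = prob A" if "A \<in> events" for A
    using that sets.sets_into_space by (simp add: Int_absorb2)
  have ii: "integrable M (\<lambda>\<omega>. a1 * indicator A1 \<omega> + a2 * indicator A2 \<omega> :: real)"
    using assms by (intro Bochner_Integration.integrable_add i)
  have iii: "integrable M (\<lambda>\<omega>. a1 * indicator A1 \<omega> + a2 * indicator A2 \<omega> + a3 * indicator A3 \<omega> :: real)"
    using assms by (intro Bochner_Integration.integrable_add i)
  have "(\<integral>\<omega>. a1 * indicator A1 \<omega> + a2 * indicator A2 \<omega> + a3 * indicator A3 \<omega> + a4 * indicator A4 \<omega> \<partial>M)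
     = (\<integral>\<omega>. a1 * indicator A1 \<omega> + a2 * indicator A2 \<omega> + a3 * indicator A3 \<omega> \<partial>M) + (\<integral>\<omega>. a4 * indicator A4 \<omega> \<partial>M)"
    by (rule Bochner_Integration.integral_add[OF iii i[OF assms(4)]])
  also have "(\<integral>\<omega>. a1 * indicator A1 \<omega> + a2 * indicator A2 \<omega> + a3 * indicator A3 \<omega> \<partial>M)
     = (\<integral>\<omega>. a1 * indicator A1 \<omega> + a2 * indicator A2 \<omega> \<partial>M) + (\<integral>\<omega>. a3 * indicator A3 \<omega> \<partial>M)"
    by (rule Bochner_Integration.integral_add[OF ii i[OF assms(3)]])
  also have "(\<integral>\<omega>. a1 * indicator A1 \<omega> + a2 * indicator A2 \<omega> \<partial>M)
     = (\<integral>\<omega>. a1 * indicator A1 \<omega> \<partial>M) + (\<integral>\<omega>. a2 * indicator A2 \<omega> \<partial>M)"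
    by (rule Bochner_Integration.integral_add[OF i[OF assms(1)] i[OF assms(2)]])
  finally show ?thesis using assms by (simp add: integral_indicator m)
qed

lemma markov:
  assumes l: "l < T" and B: "B \<in> sets (F l)"
  shows "(\<integral>\<omega>. indicator B \<omega> * \<phi> (Iv (Suc l) \<omega>) \<partial>M)
       = (\<integral>\<omega>. indicator B \<omega> * (u_coef \<gamma> (Suc l) * \<phi> (Iv l \<omega>) + v_coef \<gamma> (Suc l) * \<phi> (- Iv l \<omega>)) \<partial>M)"
proof -
  define u where "u = u_coef \<gamma> (Suc l)"
  define v where "v = v_coef \<gamma> (Suc l)"
  define B1 where "B1 = B \<inter> {\<omega> \<in> space M. Iv l \<omega> = 1}"
  define Bm where "Bm = B \<inter> {\<omega> \<in> space M. Iv l \<omega> = -1}"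
  have B1F: "B1 \<in> sets (F l)" unfolding B1_def using B Iv_set_F l by auto
  have BmF: "Bm \<in> sets (F l)" unfolding Bm_def using B Iv_set_F l by auto
  have B1M: "B1 \<in> events" and BmM: "Bm \<in> events" using B1F BmF F_M by auto
  have BM: "B \<in> events" using B F_M by auto
  have S1: "Sp l 1 \<in> events" and Sm: "Sp l (-1) \<in> events" using Sp_sets l by auto
  have meas1: "(\<lambda>\<omega>. indicator B \<omega> * \<phi> (Iv (Suc l) \<omega>)) \<in> borel_measurable M"
    using BM Iv_meas[of "Suc l" \<phi>] l by simp
  have "(\<integral>\<omega>. indicator B \<omega> * \<phi> (Iv (Suc l) \<omega>) \<partial>M)
     = (\<integral>\<omega>. \<phi> 1 * indicator (B1 \<inter> Sp l 1) \<omega> + \<phi> (-1) * indicator (B1 \<inter> Sp l (-1)) \<omega>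
          + \<phi> (-1) * indicator (Bm \<inter> Sp l 1) \<omega> + \<phi> 1 * indicator (Bm \<inter> Sp l (-1)) \<omega> \<partial>M)"
  proof (rule integral_cong_AE)
    show "(\<lambda>\<omega>. indicator B \<omega> * \<phi> (Iv (Suc l) \<omega>)) \<in> borel_measurable M" by (rule meas1)
    show "(\<lambda>\<omega>. \<phi> 1 * indicator (B1 \<inter> Sp l 1) \<omega> + \<phi> (-1) * indicator (B1 \<inter> Sp l (-1)) \<omega>
          + \<phi> (-1) * indicator (Bm \<inter> Sp l 1) \<omega> + \<phi> 1 * indicator (Bm \<inter> Sp l (-1)) \<omega>) \<in> borel_measurable M"
      using B1M BmM S1 Sm by (intro borel_measurable_add borel_measurable_times borel_measurable_const borel_measurable_indicator sets.Int)
    show "AE \<omega> in M. indicator B \<omega> * \<phi> (Iv (Suc l) \<omega>) = \<phi> 1 * indicator (B1 \<inter> Sp l 1) \<omega> + \<phi> (-1) * indicator (B1 \<inter> Sp l (-1)) \<omega>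
          + \<phi> (-1) * indicator (Bm \<inter> Sp l 1) \<omega> + \<phi> 1 * indicator (Bm \<inter> Sp l (-1)) \<omega>"
      using Iv_step[OF l]
    proof eventually_elim
      case (elim \<omega>)
      have s: "(-1::int) ^ nat (D l \<omega>) = 1 \<or> (-1::int) ^ nat (D l \<omega>) = -1" by (simp add: minus_one_power_iff)
      show ?case
      proof (cases "\<omega> \<in> B")
        case False then show ?thesis by (simp add: B1_def Bm_def)
      next
        case True
        then have sp: "\<omega> \<in> space M" using BM sets.sets_into_space by auto
        show ?thesis using Iv_vals[of l \<omega>] s True sp elim
          by (auto simp: B1_def Bm_def Sp_def indicator_def)
      qed
    qed
  qed
  also have "\<dots> = \<phi> 1 * prob (B1 \<inter> Sp l 1) + \<phi> (-1) * prob (B1 \<inter> Sp l (-1))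
          + \<phi> (-1) * prob (Bm \<inter> Sp l 1) + \<phi> 1 * prob (Bm \<inter> Sp l (-1))"
    using B1M BmM S1 Sm by (intro int_ind4) auto
  also have "\<dots> = (u * \<phi> 1 + v * \<phi> (-1)) * prob B1 + (u * \<phi> (-1) + v * \<phi> 1) * prob Bm"
    using indep_F[OF l B1F Sp_genD] indep_F[OF l BmF Sp_genD] prob_Sp1[OF l] prob_Spm1[OF l]
    by (simp add: u_def v_def algebra_simps)
  also have "\<dots> = (\<integral>\<omega>. (u * \<phi> 1 + v * \<phi> (-1)) * indicator B1 \<omega> + (u * \<phi> (-1) + v * \<phi> 1) * indicator Bm \<omega>
         + 0 * indicator {} \<omega> + 0 * indicator {} \<omega> \<partial>M)"
    using B1M BmM by (subst int_ind4) auto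
  also have "\<dots> = (\<integral>\<omega>. indicator B \<omega> * (u * \<phi> (Iv l \<omega>) + v * \<phi> (- Iv l \<omega>)) \<partial>M)"
  proof (rule Bochner_Integration.integral_cong[OF refl])
    fix \<omega> assume sp: "\<omega> \<in> space M"
    show "(u * \<phi> 1 + v * \<phi> (-1)) * indicator B1 \<omega> + (u * \<phi> (-1) + v * \<phi> 1) * indicator Bm \<omega>
         + 0 * indicator {} \<omega> + 0 * indicator {} \<omega> = indicator B \<omega> * (u * \<phi> (Iv l \<omega>) + v * \<phi> (- Iv l \<omega>))"
      using Iv_vals[of l \<omega>] sp by (auto simp: B1_def Bm_def indicator_def)
  qed
  finally show ?thesis by (simp add: u_def v_def)
qed

definition rho :: "int \<Rightarrow> real" where
  "rho i = (if i = -1 then 1 else 0) - (if i = 1 then 1 else 0)"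

lemma rho_bound: "\<bar>rho i\<bar> \<le> 1" by (simp add: rho_def)

declare Qfun.simps[simp del]

lemma Qfun_nonneg: "0 \<le> Qfun \<gamma> T k i"
proof (induction "T - k" arbitrary: k i rule: less_induct)
  case less
  show ?case
  proof (cases "T \<le> k")
    case True then show ?thesis by (subst Qfun.simps) simp
  next
    case False
    then have IH: "0 \<le> Qfun \<gamma> T (Suc k) j" for j using less by auto
    have g: "0 \<le> \<gamma> k" using gam False by auto
    have "exp (- 2 * \<gamma> k) \<le> 1" using g by simp
    then have uv: "0 \<le> v_coef \<gamma> (Suc k)" "0 \<le> u_coef \<gamma> (Suc k)"
      by (auto simp: u_coef_def v_coef_def add_nonneg_nonneg)
    show ?thesis
      using False IH uv by (subst Qfun.simps) (auto intro!: add_nonneg_nonneg mult_nonneg_nonneg)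
  qed
qed

definition phi :: "nat \<Rightarrow> int \<Rightarrow> real" where
  "phi l j = rho j + Qfun \<gamma> T (Suc l) j"

definition hh :: "nat \<Rightarrow> int \<Rightarrow> real" where
  "hh l i = u_coef \<gamma> (Suc l) * phi l i + v_coef \<gamma> (Suc l) * phi l (- i)"

lemma Q_rec: assumes "l < T" "i = 1 \<or> i = -1" shows "Qfun \<gamma> T l i = max 0 (hh l i)"
proof -
  have uv: "u_coef \<gamma> (Suc l) - v_coef \<gamma> (Suc l) = exp (- 2 * \<gamma> l)"
    by (simp add: u_coef_def v_coef_def field_simps)
  have g: "0 \<le> \<gamma> l" using gam assms by auto
  have "exp (- 2 * \<gamma> l) \<le> 1" using g by simp
  then have uv0: "0 \<le> v_coef \<gamma> (Suc l)" "0 \<le> u_coef \<gamma> (Suc l)"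
    by (auto simp: u_coef_def v_coef_def add_nonneg_nonneg)
  have q: "0 \<le> Qfun \<gamma> T (Suc l) j" for j by (rule Qfun_nonneg)
  from assms(2) show ?thesis
  proof
    assume i: "i = 1"
    have "hh l i = - exp (- 2 * \<gamma> l) + u_coef \<gamma> (Suc l) * Qfun \<gamma> T (Suc l) 1
          + v_coef \<gamma> (Suc l) * Qfun \<gamma> T (Suc l) (-1)"
      unfolding hh_def phi_def rho_def i uv[symmetric] by (simp add: algebra_simps)
    then show ?thesis using assms(1) i by (subst Qfun.simps) simp
  next
    assume i: "i = -1"
    have h: "hh l i = exp (- 2 * \<gamma> l) + v_coef \<gamma> (Suc l) * Qfun \<gamma> T (Suc l) 1
          + u_coef \<gamma> (Suc l) * Qfun \<gamma> T (Suc l) (-1)"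
      unfolding hh_def phi_def rho_def i uv[symmetric] by (simp add: algebra_simps)
    have "0 \<le> hh l i" unfolding h using q uv0 by (intro add_nonneg_nonneg mult_nonneg_nonneg) auto
    then show ?thesis using assms(1) i h by (subst Qfun.simps) simp
  qed
qed

definition G :: "nat \<Rightarrow> ('a \<Rightarrow> nat) \<Rightarrow> 'a \<Rightarrow> real" where
  "G l \<tau> \<omega> = (\<Sum>j\<in>{Suc l..T}. rho (Iv j \<omega>) * (if j \<le> \<tau> \<omega> then 1 else 0))"

definition Qv :: "nat \<Rightarrow> 'a \<Rightarrow> real" where
  "Qv l \<omega> = Qfun \<gamma> T l (Iv l \<omega>)"

definition stp :: "nat \<Rightarrow> ('a \<Rightarrow> nat) \<Rightarrow> bool" where
  "stp l \<tau> \<longleftrightarrow> (\<forall>j. {\<omega> \<in> space M. \<tau> \<omega> \<le> j} \<in> sets (F j)) \<and> (\<forall>\<omega> \<in> space M. \<tau> \<omega> \<in> {l..T})"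

lemma G_step: assumes "l < T" "l \<le> \<tau> \<omega>"
  shows "G l \<tau> \<omega> = (if l < \<tau> \<omega> then rho (Iv (Suc l) \<omega>) + G (Suc l) \<tau> \<omega> else 0)"
proof (cases "l < \<tau> \<omega>")
  case True
  then show ?thesis unfolding G_def using assms by (subst sum.atLeast_Suc_atMost) auto
next
  case False
  then have "\<tau> \<omega> = l" using assms by auto
  then show ?thesis unfolding G_def by (auto intro!: sum.neutral)
qed

lemma G_cong: "\<tau> \<omega> = \<tau>' \<omega> \<Longrightarrow> G l \<tau> \<omega> = G l \<tau>' \<omega>"
  unfolding G_def by simp

lemma int_Iv: assumes "l \<le> T" shows "integrable M (\<lambda>\<omega>. f (Iv l \<omega>) :: real)"
proof (rule integrable_const_bound[where B="\<bar>f 1\<bar> + \<bar>f (-1)\<bar>"])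
  show "AE x in M. norm (f (Iv l x)) \<le> \<bar>f 1\<bar> + \<bar>f (- 1)\<bar>"
  proof (rule AE_I2)
    fix x show "norm (f (Iv l x)) \<le> \<bar>f 1\<bar> + \<bar>f (- 1)\<bar>" using Iv_vals[of l x] by auto
  qed
qed (rule Iv_meas[OF assms])

lemma int_ind: assumes "A \<in> events" "integrable M f" shows "integrable M (\<lambda>\<omega>. indicator A \<omega> * f \<omega> :: real)"
  using integrable_mult_indicator[OF assms] by simp

lemma tau_meas: assumes "stp l \<tau>" shows "\<tau> \<in> measurable M (count_space UNIV)"
proof (rule measurable_count_space_eq2_countable[THEN iffD2], safe)
  fix a
  have le: "{\<omega> \<in> space M. \<tau> \<omega> \<le> j} \<in> events" for j
    using assms F_M unfolding stp_def by blast
  show "\<tau> -` {a} \<inter> space M \<in> events"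
  proof (cases a)
    case 0
    then have "\<tau> -` {a} \<inter> space M = {\<omega> \<in> space M. \<tau> \<omega> \<le> 0}" by auto
    then show ?thesis using le[of 0] by simp
  next
    case (Suc b)
    then have "\<tau> -` {a} \<inter> space M = {\<omega> \<in> space M. \<tau> \<omega> \<le> a} - {\<omega> \<in> space M. \<tau> \<omega> \<le> b}" by auto
    then show ?thesis using le by auto
  qed
qed auto

lemma tau_meas_f: "stp l \<tau> \<Longrightarrow> (\<lambda>\<omega>. f (\<tau> \<omega>) :: real) \<in> borel_measurable M"
  using measurable_compose[OF tau_meas, of l \<tau> f borel] by simp

lemma int_G: assumes "stp l \<tau>" shows "integrable M (G k \<tau>)"
  unfolding G_def[abs_def]
proof (rule Bochner_Integration.integrable_sum)
  fix j assume j: "j \<in> {Suc k..T}"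
  show "integrable M (\<lambda>\<omega>. rho (Iv j \<omega>) * (if j \<le> \<tau> \<omega> then 1 else 0))"
  proof (rule integrable_const_bound[where B=1])
    show "AE x in M. norm (rho (Iv j x) * (if j \<le> \<tau> x then 1 else 0)) \<le> 1"
      by (rule AE_I2) (use rho_bound in \<open>auto simp: abs_mult\<close>)
    show "(\<lambda>\<omega>. rho (Iv j \<omega>) * (if j \<le> \<tau> \<omega> then 1 else 0)) \<in> borel_measurable M"
      using Iv_meas[of j rho] tau_meas_f[OF assms, of "\<lambda>t. if j \<le> t then 1 else 0"] j
      by (intro borel_measurable_times) auto
  qed
qed

lemma Qv_nonneg: "0 \<le> Qv l \<omega>" unfolding Qv_def by (rule Qfun_nonneg)

lemma Qv_rec: "l < T \<Longrightarrow> Qv l \<omega> = max 0 (hh l (Iv l \<omega>))"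
  unfolding Qv_def using Q_rec Iv_vals by blast

lemma int_Qv: "l \<le> T \<Longrightarrow> integrable M (Qv l)"
  unfolding Qv_def[abs_def] by (rule int_Iv)

lemma base_G: "G T \<tau> \<omega> = 0" unfolding G_def by simp

lemma base_Qv: "Qv T \<omega> = 0" unfolding Qv_def by (subst Qfun.simps) simp

lemma step_le:
  assumes l: "l < T" and tau: "stp l \<tau>" and A: "A \<in> sets (F l)"
    and IH: "\<And>\<tau>. stp (Suc l) \<tau> \<Longrightarrow> \<forall>A\<in>sets (F (Suc l)). (\<integral>\<omega>. indicator A \<omega> * G (Suc l) \<tau> \<omega> \<partial>M) \<le> (\<integral>\<omega>. indicator A \<omega> * Qv (Suc l) \<omega> \<partial>M)"
  shows "(\<integral>\<omega>. indicator A \<omega> * G l \<tau> \<omega> \<partial>M) \<le> (\<integral>\<omega>. indicator A \<omega> * Qv l \<omega> \<partial>M)"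
proof -
  define \<tau>' where "\<tau>' \<omega> = max (\<tau> \<omega>) (Suc l)" for \<omega>
  have tau_le: "{\<omega> \<in> space M. \<tau> \<omega> \<le> j} \<in> sets (F j)" for j using tau unfolding stp_def by blast
  have tau_rng: "\<omega> \<in> space M \<Longrightarrow> l \<le> \<tau> \<omega> \<and> \<tau> \<omega> \<le> T" for \<omega> using tau unfolding stp_def by auto
  have stp': "stp (Suc l) \<tau>'"
    unfolding stp_def
  proof safe
    fix j
    have "{\<omega> \<in> space M. \<tau>' \<omega> \<le> j} = (if Suc l \<le> j then {\<omega> \<in> space M. \<tau> \<omega> \<le> j} else {})"
      by (auto simp: \<tau>'_def)
    then show "{\<omega> \<in> space M. \<tau>' \<omega> \<le> j} \<in> sets (F j)" using tau_le by simp
  next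
    fix \<omega> assume "\<omega> \<in> space M" then show "\<tau>' \<omega> \<in> {Suc l..T}" using tau_rng l by (auto simp: \<tau>'_def)
  qed
  define C where "C = space M - {\<omega> \<in> space M. \<tau> \<omega> \<le> l}"
  have CF: "C \<in> sets (F l)" unfolding C_def using tau_le[of l] sets.compl_sets[of _ "F l"] by simp
  define A' where "A' = A \<inter> C"
  have A'F: "A' \<in> sets (F l)" unfolding A'_def using A CF by auto
  have A'F1: "A' \<in> sets (F (Suc l))" using A'F F_mono[of l "Suc l"] by auto
  have A'M: "A' \<in> events" using A'F F_M by auto
  have AM: "A \<in> events" using A F_M by auto
  have i1: "integrable M (\<lambda>\<omega>. indicator A' \<omega> * rho (Iv (Suc l) \<omega>))" using l A'M by (intro int_ind int_Iv) auto
  have i2: "integrable M (\<lambda>\<omega>. indicator A' \<omega> * G (Suc l) \<tau>' \<omega>)" using A'M int_G[OF stp'] by (intro int_ind)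
  have i3: "integrable M (\<lambda>\<omega>. indicator A' \<omega> * Qv (Suc l) \<omega>)" using A'M int_Qv l by (intro int_ind) auto
  have "(\<integral>\<omega>. indicator A \<omega> * G l \<tau> \<omega> \<partial>M) = (\<integral>\<omega>. indicator A' \<omega> * rho (Iv (Suc l) \<omega>) + indicator A' \<omega> * G (Suc l) \<tau>' \<omega> \<partial>M)"
  proof (rule Bochner_Integration.integral_cong[OF refl])
    fix \<omega> assume sp: "\<omega> \<in> space M"
    show "indicator A \<omega> * G l \<tau> \<omega> = indicator A' \<omega> * rho (Iv (Suc l) \<omega>) + indicator A' \<omega> * G (Suc l) \<tau>' \<omega>"
    proof (cases "l < \<tau> \<omega>")
      case True
      then have "\<tau>' \<omega> = \<tau> \<omega>" by (simp add: \<tau>'_def)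
      then have "G (Suc l) \<tau>' \<omega> = G (Suc l) \<tau> \<omega>" by (rule G_cong)
      then show ?thesis using True sp G_step[OF l, of \<tau> \<omega>] by (auto simp: A'_def C_def indicator_def algebra_simps)
    next
      case False
      then show ?thesis using sp G_step[OF l, of \<tau> \<omega>] tau_rng[OF sp] by (auto simp: A'_def C_def indicator_def)
    qed
  qed
  also have "\<dots> = (\<integral>\<omega>. indicator A' \<omega> * rho (Iv (Suc l) \<omega>) \<partial>M) + (\<integral>\<omega>. indicator A' \<omega> * G (Suc l) \<tau>' \<omega> \<partial>M)"
    by (rule Bochner_Integration.integral_add[OF i1 i2])
  also have "\<dots> \<le> (\<integral>\<omega>. indicator A' \<omega> * rho (Iv (Suc l) \<omega>) \<partial>M) + (\<integral>\<omega>. indicator A' \<omega> * Qv (Suc l) \<omega> \<partial>M)"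
    using IH[OF stp'] A'F1 by auto
  also have "\<dots> = (\<integral>\<omega>. indicator A' \<omega> * rho (Iv (Suc l) \<omega>) + indicator A' \<omega> * Qv (Suc l) \<omega> \<partial>M)"
    by (rule Bochner_Integration.integral_add[OF i1 i3, symmetric])
  also have "\<dots> = (\<integral>\<omega>. indicator A' \<omega> * phi l (Iv (Suc l) \<omega>) \<partial>M)"
    by (rule Bochner_Integration.integral_cong[OF refl]) (simp add: phi_def Qv_def algebra_simps)
  also have "\<dots> = (\<integral>\<omega>. indicator A' \<omega> * hh l (Iv l \<omega>) \<partial>M)"
    unfolding hh_def using markov[OF l A'F, of "phi l"] by simp
  also have "\<dots> \<le> (\<integral>\<omega>. indicator A \<omega> * Qv l \<omega> \<partial>M)"
  proof (rule integral_mono)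
    show "integrable M (\<lambda>\<omega>. indicator A' \<omega> * hh l (Iv l \<omega>))" using A'M l by (intro int_ind int_Iv) auto
    show "integrable M (\<lambda>\<omega>. indicator A \<omega> * Qv l \<omega>)" using AM l int_Qv by (intro int_ind) auto
    fix \<omega> assume sp: "\<omega> \<in> space M"
    show "indicator A' \<omega> * hh l (Iv l \<omega>) \<le> indicator A \<omega> * Qv l \<omega>"
      using Qv_rec[OF l, of \<omega>] Qv_nonneg[of l \<omega>] by (auto simp: A'_def indicator_def)
  qed
  finally show ?thesis .
qed

lemma step_eq:
  assumes l: "l < T" and tau1: "stp (Suc l) \<tau>1"
    and IH: "\<forall>A\<in>sets (F (Suc l)). (\<integral>\<omega>. indicator A \<omega> * G (Suc l) \<tau>1 \<omega> \<partial>M) = (\<integral>\<omega>. indicator A \<omega> * Qv (Suc l) \<omega> \<partial>M)"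
  shows "\<exists>\<tau>. stp l \<tau> \<and> (\<forall>A\<in>sets (F l). (\<integral>\<omega>. indicator A \<omega> * G l \<tau> \<omega> \<partial>M) = (\<integral>\<omega>. indicator A \<omega> * Qv l \<omega> \<partial>M))"
proof -
  define \<tau> where "\<tau> \<omega> = (if 0 < Qv l \<omega> then \<tau>1 \<omega> else l)" for \<omega>
  have tau1_le: "{\<omega> \<in> space M. \<tau>1 \<omega> \<le> j} \<in> sets (F j)" for j using tau1 unfolding stp_def by blast
  have tau1_rng: "\<omega> \<in> space M \<Longrightarrow> Suc l \<le> \<tau>1 \<omega> \<and> \<tau>1 \<omega> \<le> T" for \<omega> using tau1 unfolding stp_def by auto
  have QF: "{\<omega> \<in> space M. Qv l \<omega> \<le> 0} \<in> sets (F l)"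
  proof -
    have "Qv l \<in> borel_measurable (F l)" unfolding Qv_def[abs_def] using Iv_meas_F l by simp
    then have "{\<omega> \<in> space (F l). Qv l \<omega> \<le> 0} \<in> sets (F l)" by measurable
    then show ?thesis by simp
  qed
  have stp: "stp l \<tau>"
    unfolding stp_def
  proof safe
    fix j
    show "{\<omega> \<in> space M. \<tau> \<omega> \<le> j} \<in> sets (F j)"
    proof (cases "j < l")
      case True
      then have "{\<omega> \<in> space M. \<tau> \<omega> \<le> j} = {}" using tau1_rng by (force simp: \<tau>_def)
      then show ?thesis by (simp only: sets.empty_sets)
    next
      case False
      then have "{\<omega> \<in> space M. \<tau> \<omega> \<le> j} = {\<omega> \<in> space M. Qv l \<omega> \<le> 0} \<union> {\<omega> \<in> space M. \<tau>1 \<omega> \<le> j}"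
        using Qv_nonneg[of l] by (auto simp: \<tau>_def)
      moreover have "{\<omega> \<in> space M. Qv l \<omega> \<le> 0} \<in> sets (F j)" using QF F_mono[of l j] False by auto
      ultimately show ?thesis using tau1_le[of j] by auto
    qed
  next
    fix \<omega> assume "\<omega> \<in> space M" then show "\<tau> \<omega> \<in> {l..T}" using tau1_rng[of \<omega>] l by (auto simp: \<tau>_def)
  qed
  have eq: "(\<integral>\<omega>. indicator A \<omega> * G l \<tau> \<omega> \<partial>M) = (\<integral>\<omega>. indicator A \<omega> * Qv l \<omega> \<partial>M)" if A: "A \<in> sets (F l)" for A
  proof -
    define C where "C = space M - {\<omega> \<in> space M. Qv l \<omega> \<le> 0}"
    have CF: "C \<in> sets (F l)" unfolding C_def using QF sets.compl_sets[of _ "F l"] by simp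
    define A' where "A' = A \<inter> C"
    have A'F: "A' \<in> sets (F l)" unfolding A'_def using A CF by auto
    have A'F1: "A' \<in> sets (F (Suc l))" using A'F F_mono[of l "Suc l"] by auto
    have A'M: "A' \<in> events" using A'F F_M by auto
    have AM: "A \<in> events" using A F_M by auto
    have i1: "integrable M (\<lambda>\<omega>. indicator A' \<omega> * rho (Iv (Suc l) \<omega>))" using l A'M by (intro int_ind int_Iv) auto
    have i2: "integrable M (\<lambda>\<omega>. indicator A' \<omega> * G (Suc l) \<tau>1 \<omega>)" using A'M int_G[OF tau1] by (intro int_ind)
    have i3: "integrable M (\<lambda>\<omega>. indicator A' \<omega> * Qv (Suc l) \<omega>)" using A'M int_Qv l by (intro int_ind) auto
    have "(\<integral>\<omega>. indicator A \<omega> * G l \<tau> \<omega> \<partial>M) = (\<integral>\<omega>. indicator A' \<omega> * rho (Iv (Suc l) \<omega>) + indicator A' \<omega> * G (Suc l) \<tau>1 \<omega> \<partial>M)"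
    proof (rule Bochner_Integration.integral_cong[OF refl])
      fix \<omega> assume sp: "\<omega> \<in> space M"
      show "indicator A \<omega> * G l \<tau> \<omega> = indicator A' \<omega> * rho (Iv (Suc l) \<omega>) + indicator A' \<omega> * G (Suc l) \<tau>1 \<omega>"
      proof (cases "0 < Qv l \<omega>")
        case True
        then have t: "\<tau> \<omega> = \<tau>1 \<omega>" by (simp add: \<tau>_def)
        then have "G (Suc l) \<tau> \<omega> = G (Suc l) \<tau>1 \<omega>" by (rule G_cong)
        moreover have "l < \<tau> \<omega>" using t tau1_rng[OF sp] by simp
        ultimately show ?thesis using True sp G_step[OF l, of \<tau> \<omega>] by (auto simp: A'_def C_def indicator_def algebra_simps)
      next
        case False
        then have "\<tau> \<omega> = l" by (simp add: \<tau>_def)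
        then show ?thesis using sp False G_step[OF l, of \<tau> \<omega>] by (auto simp: A'_def C_def indicator_def)
      qed
    qed
    also have "\<dots> = (\<integral>\<omega>. indicator A' \<omega> * rho (Iv (Suc l) \<omega>) \<partial>M) + (\<integral>\<omega>. indicator A' \<omega> * G (Suc l) \<tau>1 \<omega> \<partial>M)"
      by (rule Bochner_Integration.integral_add[OF i1 i2])
    also have "\<dots> = (\<integral>\<omega>. indicator A' \<omega> * rho (Iv (Suc l) \<omega>) \<partial>M) + (\<integral>\<omega>. indicator A' \<omega> * Qv (Suc l) \<omega> \<partial>M)"
      using IH A'F1 by auto
    also have "\<dots> = (\<integral>\<omega>. indicator A' \<omega> * rho (Iv (Suc l) \<omega>) + indicator A' \<omega> * Qv (Suc l) \<omega> \<partial>M)"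
      by (rule Bochner_Integration.integral_add[OF i1 i3, symmetric])
    also have "\<dots> = (\<integral>\<omega>. indicator A' \<omega> * phi l (Iv (Suc l) \<omega>) \<partial>M)"
      by (rule Bochner_Integration.integral_cong[OF refl]) (simp add: phi_def Qv_def algebra_simps)
    also have "\<dots> = (\<integral>\<omega>. indicator A' \<omega> * hh l (Iv l \<omega>) \<partial>M)"
      unfolding hh_def using markov[OF l A'F, of "phi l"] by simp
    also have "\<dots> = (\<integral>\<omega>. indicator A \<omega> * Qv l \<omega> \<partial>M)"
    proof (rule Bochner_Integration.integral_cong[OF refl])
      fix \<omega> assume sp: "\<omega> \<in> space M"
      show "indicator A' \<omega> * hh l (Iv l \<omega>) = indicator A \<omega> * Qv l \<omega>"
        using Qv_rec[OF l, of \<omega>] Qv_nonneg[of l \<omega>] sp by (auto simp: A'_def C_def indicator_def max_def)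
    qed
    finally show ?thesis .
  qed
  show ?thesis using stp eq by blast
qed

lemma DP: "l \<le> T \<Longrightarrow> (\<forall>\<tau>. stp l \<tau> \<longrightarrow> (\<forall>A\<in>sets (F l). (\<integral>\<omega>. indicator A \<omega> * G l \<tau> \<omega> \<partial>M) \<le> (\<integral>\<omega>. indicator A \<omega> * Qv l \<omega> \<partial>M)))
   \<and> (\<exists>\<tau>. stp l \<tau> \<and> (\<forall>A\<in>sets (F l). (\<integral>\<omega>. indicator A \<omega> * G l \<tau> \<omega> \<partial>M) = (\<integral>\<omega>. indicator A \<omega> * Qv l \<omega> \<partial>M)))"
proof (induction "T - l" arbitrary: l rule: less_induct)
  case less
  show ?case
  proof (cases "l = T")
    case True
    have stpT: "stp T (\<lambda>_. T)"
      unfolding stp_def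
    proof safe
      fix j
      have "{\<omega> \<in> space M. T \<le> j} = (if T \<le> j then space (F j) else {})" by simp
      then show "{\<omega> \<in> space M. T \<le> j} \<in> sets (F j)" by (metis sets.empty_sets sets.top)
    qed auto
    show ?thesis using True stpT by (auto simp: base_G base_Qv)
  next
    case False
    then have l: "l < T" using less by auto
    then have IH: "(\<forall>\<tau>. stp (Suc l) \<tau> \<longrightarrow> (\<forall>A\<in>sets (F (Suc l)). (\<integral>\<omega>. indicator A \<omega> * G (Suc l) \<tau> \<omega> \<partial>M) \<le> (\<integral>\<omega>. indicator A \<omega> * Qv (Suc l) \<omega> \<partial>M)))
   \<and> (\<exists>\<tau>. stp (Suc l) \<tau> \<and> (\<forall>A\<in>sets (F (Suc l)). (\<integral>\<omega>. indicator A \<omega> * G (Suc l) \<tau> \<omega> \<partial>M) = (\<integral>\<omega>. indicator A \<omega> * Qv (Suc l) \<omega> \<partial>M)))"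
      using less by auto
    show ?thesis
    proof
      show "\<forall>\<tau>. stp l \<tau> \<longrightarrow> (\<forall>A\<in>sets (F l). (\<integral>\<omega>. indicator A \<omega> * G l \<tau> \<omega> \<partial>M) \<le> (\<integral>\<omega>. indicator A \<omega> * Qv l \<omega> \<partial>M))"
        using step_le[OF l] IH by blast
      show "\<exists>\<tau>. stp l \<tau> \<and> (\<forall>A\<in>sets (F l). (\<integral>\<omega>. indicator A \<omega> * G l \<tau> \<omega> \<partial>M) = (\<integral>\<omega>. indicator A \<omega> * Qv l \<omega> \<partial>M))"
        using step_eq[OF l] IH by blast
    qed
  qed
qed

lemma Q_pos: assumes "k < T" shows "0 < Qfun \<gamma> T k (-1)"
proof -
  have g: "0 \<le> \<gamma> k" using gam assms by auto
  have "exp (- 2 * \<gamma> k) \<le> 1" using g by simp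
  then have uv: "0 \<le> v_coef \<gamma> (Suc k)" "0 \<le> u_coef \<gamma> (Suc k)"
    by (auto simp: u_coef_def v_coef_def add_nonneg_nonneg)
  have "0 < exp (- 2 * \<gamma> k) + v_coef \<gamma> (Suc k) * Qfun \<gamma> T (Suc k) 1 + u_coef \<gamma> (Suc k) * Qfun \<gamma> T (Suc k) (-1)"
    using uv Qfun_nonneg[of "Suc k" 1] Qfun_nonneg[of "Suc k" "-1"]
    by (intro add_pos_nonneg mult_nonneg_nonneg) auto
  then show ?thesis using assms by (subst Qfun.simps) simp
qed

lemma ae_le_from_int:
  fixes f g :: "'a \<Rightarrow> real"
  assumes fm: "f \<in> borel_measurable (F k)" and gm: "g \<in> borel_measurable (F k)"
    and fi: "integrable M f" and gi: "integrable M g"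
    and le: "\<And>A. A \<in> sets (F k) \<Longrightarrow> (\<integral>\<omega>. indicator A \<omega> * f \<omega> \<partial>M) \<le> (\<integral>\<omega>. indicator A \<omega> * g \<omega> \<partial>M)"
  shows "AE \<omega> in M. f \<omega> \<le> g \<omega>"
proof -
  define A where "A = {\<omega> \<in> space M. g \<omega> < f \<omega>}"
  have [measurable]: "f \<in> borel_measurable (F k)" "g \<in> borel_measurable (F k)" using fm gm by auto
  have "{\<omega> \<in> space (F k). g \<omega> < f \<omega>} \<in> sets (F k)" by measurable
  then have AF: "A \<in> sets (F k)" unfolding A_def by simp
  then have AM: "A \<in> events" using F_M by auto
  have i1: "integrable M (\<lambda>\<omega>. indicator A \<omega> * f \<omega>)" by (rule int_ind[OF AM fi])
  have i2: "integrable M (\<lambda>\<omega>. indicator A \<omega> * g \<omega>)" by (rule int_ind[OF AM gi])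
  have id: "integrable M (\<lambda>\<omega>. indicator A \<omega> * (f \<omega> - g \<omega>))"
    using Bochner_Integration.integrable_diff[OF i1 i2] by (simp add: algebra_simps)
  have "(\<integral>\<omega>. indicator A \<omega> * (f \<omega> - g \<omega>) \<partial>M) = (\<integral>\<omega>. indicator A \<omega> * f \<omega> \<partial>M) - (\<integral>\<omega>. indicator A \<omega> * g \<omega> \<partial>M)"
    using Bochner_Integration.integral_diff[OF i1 i2] by (simp add: algebra_simps)
  also have "\<dots> \<le> 0" using le[OF AF] by simp
  finally have le0: "(\<integral>\<omega>. indicator A \<omega> * (f \<omega> - g \<omega>) \<partial>M) \<le> 0" .
  have nn: "AE \<omega> in M. 0 \<le> indicator A \<omega> * (f \<omega> - g \<omega>)"
    by (rule AE_I2) (auto simp: A_def indicator_def)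
  have "0 \<le> (\<integral>\<omega>. indicator A \<omega> * (f \<omega> - g \<omega>) \<partial>M)" by (rule integral_nonneg_AE[OF nn])
  with le0 have "(\<integral>\<omega>. indicator A \<omega> * (f \<omega> - g \<omega>) \<partial>M) = 0" by simp
  then have "AE \<omega> in M. indicator A \<omega> * (f \<omega> - g \<omega>) = 0"
    using integral_nonneg_eq_0_iff_AE[OF id nn] by simp
  then show ?thesis using AE_space
    by eventually_elim (auto simp: A_def indicator_def split: if_splits)
qed

lemma main_k: assumes k: "k \<le> T"
  shows "is_ess_sup M {real_cond_exp M (F k) (G k \<tau>) | \<tau>. stopping_time F \<tau> \<and> (\<forall>\<omega> \<in> space M. \<tau> \<omega> \<in> {k..T})} (Qv k)"
proof -
  interpret fs: finite_measure_subalgebra M "F k"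
    by (simp add: finite_measure_subalgebra_def finite_measure_subalgebra_axioms_def subalg finite_measure_axioms)
  have stp_iff: "stopping_time F \<tau> \<and> (\<forall>\<omega> \<in> space M. \<tau> \<omega> \<in> {k..T}) \<longleftrightarrow> stp k \<tau>" for \<tau>
    unfolding stopping_time_def stp_def pred_def by simp
  have QmF: "Qv k \<in> borel_measurable (F k)" unfolding Qv_def[abs_def] using Iv_meas_F k by simp
  have QM: "Qv k \<in> borel_measurable M" using meas_F_M[OF QmF] .
  have Qi: "integrable M (Qv k)" using int_Qv k by simp
  have intA: "(\<integral>\<omega>. indicator A \<omega> * G k \<tau> \<omega> \<partial>M) = (\<integral>\<omega>. indicator A \<omega> * real_cond_exp M (F k) (G k \<tau>) \<omega> \<partial>M)"
    if "stp k \<tau>" "A \<in> sets (F k)" for \<tau> A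
    using fs.real_cond_exp_intA[OF int_G[OF that(1)] that(2)] unfolding set_lebesgue_integral_def by simp
  have upper: "AE \<omega> in M. real_cond_exp M (F k) (G k \<tau>) \<omega> \<le> Qv k \<omega>" if tau: "stp k \<tau>" for \<tau>
  proof (rule ae_le_from_int[OF borel_measurable_cond_exp QmF fs.real_cond_exp_int(1)[OF int_G[OF tau]] Qi])
    fix A assume A: "A \<in> sets (F k)"
    show "(\<integral>\<omega>. indicator A \<omega> * real_cond_exp M (F k) (G k \<tau>) \<omega> \<partial>M) \<le> (\<integral>\<omega>. indicator A \<omega> * Qv k \<omega> \<partial>M)"
    proof -
      have "(\<integral>\<omega>. indicator A \<omega> * G k \<tau> \<omega> \<partial>M) \<le> (\<integral>\<omega>. indicator A \<omega> * Qv k \<omega> \<partial>M)"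
        using DP[OF k] tau A by blast
      then show ?thesis using intA[OF tau A] by simp
    qed
  qed
  obtain \<tau>s where taus: "stp k \<tau>s"
    and eqs: "\<forall>A\<in>sets (F k). (\<integral>\<omega>. indicator A \<omega> * G k \<tau>s \<omega> \<partial>M) = (\<integral>\<omega>. indicator A \<omega> * Qv k \<omega> \<partial>M)"
    using DP[OF k] by blast
  have ae_eq: "AE \<omega> in M. real_cond_exp M (F k) (G k \<tau>s) \<omega> = Qv k \<omega>"
  proof (rule fs.real_cond_exp_charact)
    fix A assume "A \<in> sets (F k)"
    then show "(\<integral>\<omega>\<in>A. G k \<tau>s \<omega> \<partial>M) = (\<integral>\<omega>\<in>A. Qv k \<omega> \<partial>M)"
      using eqs unfolding set_lebesgue_integral_def by simp
  qed (use int_G[OF taus] Qi QmF in auto)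
  show ?thesis
    unfolding is_ess_sup_def
  proof (intro conjI ballI allI impI)
    show "Qv k \<in> borel_measurable M" by (rule QM)
  next
    fix X assume "X \<in> {real_cond_exp M (F k) (G k \<tau>) | \<tau>. stopping_time F \<tau> \<and> (\<forall>\<omega> \<in> space M. \<tau> \<omega> \<in> {k..T})}"
    then obtain \<tau> where "X = real_cond_exp M (F k) (G k \<tau>)" "stp k \<tau>" using stp_iff by blast
    then show "AE \<omega> in M. X \<omega> \<le> Qv k \<omega>" using upper by simp
  next
    fix Z :: "'a \<Rightarrow> real"
    assume Zm: "Z \<in> borel_measurable M"
      and Zup: "\<forall>X\<in>{real_cond_exp M (F k) (G k \<tau>) | \<tau>. stopping_time F \<tau> \<and> (\<forall>\<omega> \<in> space M. \<tau> \<omega> \<in> {k..T})}. AE \<omega> in M. X \<omega> \<le> Z \<omega>"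
    have "real_cond_exp M (F k) (G k \<tau>s) \<in> {real_cond_exp M (F k) (G k \<tau>) | \<tau>. stopping_time F \<tau> \<and> (\<forall>\<omega> \<in> space M. \<tau> \<omega> \<in> {k..T})}"
      using taus stp_iff by blast
    with Zup have "AE \<omega> in M. real_cond_exp M (F k) (G k \<tau>s) \<omega> \<le> Z \<omega>" by blast
    with ae_eq show "AE \<omega> in M. Qv k \<omega> \<le> Z \<omega>" by eventually_elim simp
  qed
qed

end

theorem lemma5p3:
  fixes M :: "'a measure" and T :: nat and \<gamma> :: "nat \<Rightarrow> real"
    and N :: "nat \<Rightarrow> 'a \<Rightarrow> int" and I0 :: int
  assumes "prob_space M"
    and "T > 0"
    and "\<forall>l < T. \<gamma> l \<ge> 0"
    and "\<forall>\<omega> \<in> space M. N 0 \<omega> = 0"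
    and "prob_space.indep_vars M (\<lambda>_. count_space UNIV) (\<lambda>l \<omega>. N (Suc l) \<omega> - N l \<omega>) {..<T}"
    and "\<forall>l < T. \<forall>n::nat. measure M {\<omega> \<in> space M. N (Suc l) \<omega> - N l \<omega> = int n}
            = exp (- \<gamma> l) * \<gamma> l ^ n / fact n"
    and "I0 \<in> {-1, 1}"
  shows "(\<forall>k \<le> T.
           is_ess_sup M
             {real_cond_exp M (aug_nat_filtration M N T k)
                (\<lambda>\<omega>. \<Sum>l \<in> {Suc k..T}.
                   ((if I0 * (-1) ^ nat (N l \<omega>) = -1 then 1 else 0)
                    - (if I0 * (-1) ^ nat (N l \<omega>) = 1 then 1 else 0))
                   * (if l \<le> \<tau> \<omega> then 1 else (0::real)))
              | \<tau>. stopping_time (aug_nat_filtration M N T) \<tau> \<and> (\<forall>\<omega> \<in> space M. \<tau> \<omega> \<in> {k..T})}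
             (\<lambda>\<omega>. Qfun \<gamma> T k (I0 * (-1) ^ nat (N k \<omega>))))
         \<and> (\<forall>k < T. Qfun \<gamma> T k (-1) > 0)"
proof -
  interpret P: poiss M T \<gamma> N I0 using assms unfolding poiss_def by auto
  have eqG: "(\<lambda>\<omega>. \<Sum>l \<in> {Suc k..T}.
                   ((if I0 * (-1) ^ nat (N l \<omega>) = -1 then 1 else 0)
                    - (if I0 * (-1) ^ nat (N l \<omega>) = 1 then 1 else 0))
                   * (if l \<le> \<tau> \<omega> then 1 else (0::real))) = P.G k \<tau>" for k \<tau>
    by (simp add: P.G_def P.rho_def P.Iv_def fun_eq_iff)
  have eqQ: "(\<lambda>\<omega>. Qfun \<gamma> T k (I0 * (-1) ^ nat (N k \<omega>))) = P.Qv k" for k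
    by (simp add: P.Qv_def P.Iv_def fun_eq_iff)
  show ?thesis unfolding eqG eqQ using P.main_k P.Q_pos by auto
qed

end
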